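(* Let $X,Y$ be real Banach spaces and let $f\in C^1(X;Y)$. Assume: (i) $f'(x)\in \mathrm{Isom}(X;Y)$ for every $x\in X$; (ii) $\sup_{\|x\|\le r}\|f'(x)^{-1}\|<+\infty$ for every $r$ with $0<r<+\infty$; (iii) there exist a point $x_0\in X$ and a locally Lipschitz continuous coercive function $k:X\to\mathbb{R}_+$ which admits all right directional derivatives $D^+_v k(x)$ ($x,v\in X$), such that $$\sup\bigl\{D^+_v k(x) : v=-f'(x)^{-1}(f(x)-f(x_0)),\ x\in X\bigr\}<+\infty.$$ Then $f$ is a global diffeomorphism $X\to f(X)$ (in particular $f$ is injective). Moreover, the range $f(X)$ is star shaped around $f(x_0)$: if $y\in f(X)$ and $s\in[0,1]$, then $f(x_0)+s(y-f(x_0))\in f(X)$. When $k\in C^1$, condition (iii) reads $$\sup_{x\in X}\bigl(-k'(x)f'(x)^{-1}(f(x)-f(x_0))\bigr)<+\infty.$$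
   Context: $\mathrm{Isom}(X;Y)$ denotes the set of bounded linear isomorphisms (with bounded inverse) from $X$ onto $Y$. $\mathbb{R}_+=[0,+\infty)$. A function $k:X\to\mathbb{R}_+$ is called coercive if it is continuous and $k(x)\to+\infty$ as $\|x\|\to+\infty$. The right directional derivative is $D^+_v k(x):=\lim_{s\to 0^+}\frac{k(x+sv)-k(x)}{s}$, assumed to exist for all $x,v\in X$. *)

theory Defs
  imports "HOL-Analysis.Analysis"
begin

definition is_isom :: "('a::real_normed_vector \<Rightarrow>\<^sub>L 'b::real_normed_vector) \<Rightarrow> bool" where
  "is_isom L \<longleftrightarrow> (\<exists>M. M o\<^sub>L L = id_blinfun \<and> L o\<^sub>L M = id_blinfun)"

definition blinfun_inv :: "('a::real_normed_vector \<Rightarrow>\<^sub>L 'b::real_normed_vector) \<Rightarrow> ('b \<Rightarrow>\<^sub>L 'a)" where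
  "blinfun_inv L = (SOME M. M o\<^sub>L L = id_blinfun \<and> L o\<^sub>L M = id_blinfun)"

definition right_dir_deriv :: "('a::real_normed_vector \<Rightarrow> real) \<Rightarrow> 'a \<Rightarrow> 'a \<Rightarrow> real" where
  "right_dir_deriv k x v = Lim (at_right 0) (\<lambda>s. (k (x + s *\<^sub>R v) - k x) / s)"

definition has_right_dir_derivs :: "('a::real_normed_vector \<Rightarrow> real) \<Rightarrow> bool" where
  "has_right_dir_derivs k \<longleftrightarrow>
     (\<forall>x v. \<exists>l. ((\<lambda>s. (k (x + s *\<^sub>R v) - k x) / s) \<longlongrightarrow> l) (at_right 0))"

definition locally_lipschitz :: "('a::metric_space \<Rightarrow> 'b::metric_space) \<Rightarrow> bool" where
  "locally_lipschitz k \<longleftrightarrow> (\<forall>x. \<exists>U L. open U \<and> x \<in> U \<and> L-lipschitz_on U k)"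

definition coercive :: "('a::real_normed_vector \<Rightarrow> real) \<Rightarrow> bool" where
  "coercive k \<longleftrightarrow> continuous_on UNIV k \<and> filterlim k at_top at_infinity"

definition C1_on :: "'a::real_normed_vector set \<Rightarrow> ('a \<Rightarrow> 'b::real_normed_vector) \<Rightarrow> bool" where
  "C1_on S f \<longleftrightarrow> (\<exists>f'. (\<forall>x\<in>S. (f has_derivative blinfun_apply (f' x)) (at x)) \<and> continuous_on S f')"

end

theory Submission
  imports Defs
begin


lemma isom_inv:
  assumes "is_isom L"
  shows "blinfun_inv L o\<^sub>L L = id_blinfun" "L o\<^sub>L blinfun_inv L = id_blinfun"
proof -
  have "\<exists>M. M o\<^sub>L L = id_blinfun \<and> L o\<^sub>L M = id_blinfun" using assms unfolding is_isom_def .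
  then have "blinfun_inv L o\<^sub>L L = id_blinfun \<and> L o\<^sub>L blinfun_inv L = id_blinfun"
    unfolding blinfun_inv_def by (rule someI_ex)
  then show "blinfun_inv L o\<^sub>L L = id_blinfun" "L o\<^sub>L blinfun_inv L = id_blinfun" by auto
qed

locale gd =
  fixes f :: "'a::banach \<Rightarrow> 'b::banach"
    and f' :: "'a \<Rightarrow> ('a \<Rightarrow>\<^sub>L 'b)"
  assumes deriv: "\<And>x. (f has_derivative blinfun_apply (f' x)) (at x)"
    and cont_deriv: "continuous_on UNIV f'"
    and isom: "\<And>x. is_isom (f' x)"
    and bdd_inv: "\<And>r. 0 < r \<Longrightarrow> bdd_above ((\<lambda>x. norm (blinfun_inv (f' x))) ` cball 0 r)"
begin

abbreviation Li where "Li x \<equiv> blinfun_inv (f' x)"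

lemma Li_left[simp]: "Li x (f' x h) = h"
proof -
  have "(Li x o\<^sub>L f' x) h = h" using isom_inv(1)[OF isom[of x]] by simp
  then show ?thesis by simp
qed

lemma Li_right[simp]: "f' x (Li x h) = h"
proof -
  have "(f' x o\<^sub>L Li x) h = h" using isom_inv(2)[OF isom[of x]] by simp
  then show ?thesis by simp
qed

lemma f_cont: "continuous_on S f"
  using deriv has_derivative_continuous continuous_at_imp_continuous_on by blast

lemma LH:
  assumes "e > 0"
  shows "\<exists>\<delta> \<rho> K g. 0 < \<delta> \<and> \<delta> \<le> e \<and> 0 < \<rho> \<and> 0 < K \<and>
     (\<forall>x1\<in>ball a \<delta>. \<forall>x2\<in>ball a \<delta>. norm (x1 - x2) \<le> K * norm (f x1 - f x2)) \<and>
     (\<forall>y\<in>ball (f a) \<rho>. g y \<in> ball a \<delta> \<and> f (g y) = y)"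
proof -
  define Ai where "Ai = Li a"
  define K0 where "K0 = norm Ai + 1"
  have K0: "K0 > 0" "norm Ai < K0" unfolding K0_def using norm_ge_zero[of Ai] by linarith+
  have Ai_bound: "norm (Ai z) \<le> K0 * norm z" for z
    using norm_blinfun[of Ai z] K0 by (smt (verit) mult_right_mono norm_ge_zero)
  obtain d where d: "d > 0" "\<And>x. dist x a < d \<Longrightarrow> dist (f' x) (f' a) < 1 / (2 * K0)"
    using cont_deriv unfolding continuous_on_iff
    by (metis K0(1) UNIV_I divide_pos_pos mult_pos_pos zero_less_numeral zero_less_one)
  define \<delta> where "\<delta> = min e d / 2"
  have \<delta>: "\<delta> > 0" "\<delta> \<le> e" "\<delta> < d" using d assms unfolding \<delta>_def by auto
  define h where "h x = x - Ai (f x)" for x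
  have hder: "(h has_derivative (\<lambda>u. u - Ai (f' x u))) (at x within cball a \<delta>)" for x
    unfolding h_def
    by (auto intro!: derivative_eq_intros deriv[THEN has_derivative_at_withinI]
             simp: blinfun.bounded_linear_right)
  have hbnd: "onorm (\<lambda>u. u - Ai (f' x u)) \<le> 1/2" if "x \<in> cball a \<delta>" for x
  proof (rule onorm_bound)
    show "0 \<le> (1::real)/2" by simp
    fix u
    have "u - Ai (f' x u) = Ai (f' a u - f' x u)"
      unfolding Ai_def by (simp add: blinfun.diff_right)
    also have "\<dots> = Ai ((f' a - f' x) u)" by (simp add: blinfun.diff_left)
    finally have eq: "u - Ai (f' x u) = Ai ((f' a - f' x) u)" .
    have "dist x a < d" using that \<delta> by (simp add: dist_commute)
    then have nd: "norm (f' a - f' x) \<le> 1 / (2 * K0)"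
      using d(2)[of x] by (simp add: dist_norm norm_minus_commute)
    have "norm (Ai ((f' a - f' x) u)) \<le> K0 * norm ((f' a - f' x) u)" by (rule Ai_bound)
    also have "\<dots> \<le> K0 * (norm (f' a - f' x) * norm u)"
      using K0 by (intro mult_left_mono norm_blinfun) auto
    also have "\<dots> \<le> K0 * (1 / (2 * K0) * norm u)"
      using K0 nd by (intro mult_left_mono mult_right_mono) auto
    also have "\<dots> = 1/2 * norm u" using K0 by simp
    finally show "norm (u - Ai (f' x u)) \<le> 1/2 * norm u" unfolding eq .
  qed
  have hlip: "norm (h x1 - h x2) \<le> 1/2 * norm (x1 - x2)" if "x1 \<in> cball a \<delta>" "x2 \<in> cball a \<delta>" for x1 x2
    using differentiable_bound[OF convex_cball hder hbnd that] .
  have est: "norm (x1 - x2) \<le> (2*K0) * norm (f x1 - f x2)" if "x1 \<in> cball a \<delta>" "x2 \<in> cball a \<delta>" for x1 x2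
  proof -
    have "x1 - x2 = (h x1 - h x2) + Ai (f x1 - f x2)"
      unfolding h_def by (simp add: blinfun.diff_right algebra_simps)
    then have "norm (x1 - x2) \<le> norm (h x1 - h x2) + norm (Ai (f x1 - f x2))"
      by (metis norm_triangle_ineq)
    also have "\<dots> \<le> 1/2 * norm (x1 - x2) + K0 * norm (f x1 - f x2)"
      using hlip[OF that] Ai_bound by (intro add_mono) auto
    finally show ?thesis by simp
  qed
  define \<rho> where "\<rho> = \<delta> / (4 * K0)"
  have \<rho>: "\<rho> > 0" unfolding \<rho>_def using \<delta> K0 by auto
  have surj: "\<exists>z\<in>ball a \<delta>. f z = y" if y: "y \<in> ball (f a) \<rho>" for y
  proof -
    define T where "T z = z - Ai (f z - y)" for z
    have Th: "T z = h z + Ai y" for z unfolding T_def h_def by (simp add: blinfun.diff_right)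
    have sub: "cball a (\<delta>/2) \<subseteq> cball a \<delta>" using \<delta> by auto
    have "\<exists>!z\<in>cball a (\<delta>/2). T z = z"
    proof (rule Banach_fix[where c="1/2"])
      show "complete (cball a (\<delta>/2))" by (simp add: complete_eq_closed)
      show "cball a (\<delta>/2) \<noteq> {}" using \<delta> by simp
      show "T ` cball a (\<delta> / 2) \<subseteq> cball a (\<delta> / 2)"
      proof
        fix w assume "w \<in> T ` cball a (\<delta> / 2)"
        then obtain z where z: "z \<in> cball a (\<delta>/2)" "w = T z" by auto
        have "T a - a = - Ai (f a - y)" unfolding T_def by simp
        then have "norm (T a - a) \<le> K0 * norm (f a - y)" using Ai_bound by (metis norm_minus_cancel)
        also have "\<dots> \<le> K0 * \<rho>" using y K0 by (intro mult_left_mono) (auto simp: dist_norm)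
        also have "\<dots> = \<delta>/4" unfolding \<rho>_def using K0 by simp
        finally have 1: "norm (T a - a) \<le> \<delta>/4" .
        have "norm (T z - T a) = norm (h z - h a)" unfolding Th by simp
        also have "\<dots> \<le> 1/2 * norm (z - a)" using z sub \<delta> by (intro hlip) auto
        also have "\<dots> \<le> 1/2 * (\<delta>/2)" using z by (auto simp: dist_norm norm_minus_commute)
        finally have 2: "norm (T z - T a) \<le> \<delta>/4" by simp
        have "norm (T z - a) \<le> norm (T z - T a) + norm (T a - a)"
          using norm_triangle_ineq[of "T z - T a" "T a - a"] by simp
        then show "w \<in> cball a (\<delta>/2)" using 1 2 z by (auto simp: dist_norm norm_minus_commute)
      qed
      fix x1 x2 assume "x1 \<in> cball a (\<delta>/2)" "x2 \<in> cball a (\<delta>/2)"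
      then have "x1 \<in> cball a \<delta>" "x2 \<in> cball a \<delta>" using sub by auto
      then show "dist (T x1) (T x2) \<le> 1/2 * dist x1 x2"
        using hlip unfolding Th dist_norm by simp
    qed auto
    then obtain z where z: "z \<in> cball a (\<delta>/2)" "T z = z" by blast
    then have "Ai (f z - y) = 0" unfolding T_def by simp
    then have "f' a (Ai (f z - y)) = 0" by simp
    then have "f z = y" unfolding Ai_def by simp
    moreover have "z \<in> ball a \<delta>" using z \<delta> by (auto simp: dist_commute)
    ultimately show ?thesis by blast
  qed
  define g where "g y = (SOME z. z \<in> ball a \<delta> \<and> f z = y)" for y
  have "\<forall>y\<in>ball (f a) \<rho>. g y \<in> ball a \<delta> \<and> f (g y) = y"
    unfolding g_def using surj by (metis (mono_tags, lifting) someI_ex)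
  moreover have "\<forall>x1\<in>ball a \<delta>. \<forall>x2\<in>ball a \<delta>. norm (x1 - x2) \<le> (2*K0) * norm (f x1 - f x2)"
    using est by auto
  ultimately show ?thesis using \<delta> \<rho> K0 by (intro exI[of _ \<delta>] exI[of _ \<rho>] exI[of _ "2*K0"] exI[of _ g]) auto
qed

end


context gd begin

lemma LH2:
  assumes "e > 0"
  shows "\<exists>\<delta> \<rho> K g. 0 < \<delta> \<and> \<delta> \<le> e \<and> 0 < \<rho> \<and> 0 < K \<and>
     (\<forall>x1\<in>ball a \<delta>. \<forall>x2\<in>ball a \<delta>. norm (x1 - x2) \<le> K * norm (f x1 - f x2)) \<and>
     (\<forall>y\<in>ball (f a) \<rho>. g y \<in> ball a \<delta> \<and> f (g y) = y) \<and>
     (\<forall>y1\<in>ball (f a) \<rho>. \<forall>y2\<in>ball (f a) \<rho>. norm (g y1 - g y2) \<le> K * norm (y1 - y2)) \<and>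
     continuous_on (ball (f a) \<rho>) g \<and>
     (\<forall>z\<in>ball a \<delta>. f z \<in> ball (f a) \<rho> \<longrightarrow> g (f z) = z) \<and> g (f a) = a"
proof -
  obtain \<delta> \<rho> K g where H: "0 < \<delta>" "\<delta> \<le> e" "0 < \<rho>" "0 < K"
     "\<forall>x1\<in>ball a \<delta>. \<forall>x2\<in>ball a \<delta>. norm (x1 - x2) \<le> K * norm (f x1 - f x2)"
     "\<forall>y\<in>ball (f a) \<rho>. g y \<in> ball a \<delta> \<and> f (g y) = y"
    using LH[OF assms, of a] by blast
  have L: "norm (g y1 - g y2) \<le> K * norm (y1 - y2)" if "y1 \<in> ball (f a) \<rho>" "y2 \<in> ball (f a) \<rho>" for y1 y2
    using H(5,6) that by metis
  have C: "continuous_on (ball (f a) \<rho>) g"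
    by (rule lipschitz_on_continuous_on[of K]) (use L H(4) in \<open>auto intro!: lipschitz_onI simp: dist_norm\<close>)
  have I: "g (f z) = z" if "z \<in> ball a \<delta>" "f z \<in> ball (f a) \<rho>" for z
  proof -
    have "norm (g (f z) - z) \<le> K * norm (f (g (f z)) - f z)" using H(5,6) that by blast
    then show ?thesis using H(6) that by auto
  qed
  have "g (f a) = a" using I H by auto
  then show ?thesis using H L C I by (intro exI[of _ \<delta>] exI[of _ \<rho>] exI[of _ K] exI[of _ g]) auto
qed

lemma open_image: "open S \<Longrightarrow> open (f ` S)"
proof (subst open_contains_ball, intro ballI)
  fix y assume S: "open S" and "y \<in> f ` S"
  then obtain a where a: "a \<in> S" "y = f a" by auto
  obtain e where e: "e > 0" "ball a e \<subseteq> S" using S a open_contains_ball by blast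
  obtain \<delta> \<rho> K g where H: "0 < \<delta>" "\<delta> \<le> e" "0 < \<rho>"
     "\<forall>y\<in>ball (f a) \<rho>. g y \<in> ball a \<delta> \<and> f (g y) = y"
    using LH[OF e(1), of a] by blast
  have "ball (f a) \<rho> \<subseteq> f ` S"
  proof
    fix z assume "z \<in> ball (f a) \<rho>"
    then have "g z \<in> ball a \<delta>" "f (g z) = z" using H by auto
    then show "z \<in> f ` S" using e H by (metis image_eqI mem_ball order_less_le_trans subsetD)
  qed
  then show "\<exists>e>0. ball y e \<subseteq> f ` S" using a H by auto
qed

lemma uniq:
  fixes J :: "real set"
  assumes "connected J" "continuous_on J \<gamma>1" "continuous_on J \<gamma>2"
    and "\<And>t. t \<in> J \<Longrightarrow> f (\<gamma>1 t) = f (\<gamma>2 t)" "t0 \<in> J" "\<gamma>1 t0 = \<gamma>2 t0" "t \<in> J"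
  shows "\<gamma>1 t = \<gamma>2 t"
proof -
  define E where "E = {t\<in>J. \<gamma>1 t = \<gamma>2 t}"
  have "closedin (top_of_set J) E"
  proof -
    have "continuous_on J (\<lambda>t. \<gamma>1 t - \<gamma>2 t)" using assms by (intro continuous_intros)
    from continuous_closedin_preimage_constant[OF this, of 0]
    show ?thesis unfolding E_def by simp
  qed
  moreover have "openin (top_of_set J) E"
    unfolding openin_euclidean_subtopology_iff
  proof (intro conjI ballI)
    show "E \<subseteq> J" unfolding E_def by auto
    fix t assume t: "t \<in> E"
    define a where "a = \<gamma>1 t"
    obtain \<delta> K where H: "0 < \<delta>" "0 < K"
       "\<forall>x1\<in>ball a \<delta>. \<forall>x2\<in>ball a \<delta>. norm (x1 - x2) \<le> K * norm (f x1 - f x2)"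
      using LH[of 1 a] by auto
    obtain d1 where d1: "d1 > 0" "\<And>s. s \<in> J \<Longrightarrow> dist s t < d1 \<Longrightarrow> dist (\<gamma>1 s) (\<gamma>1 t) < \<delta>"
      using assms(2) t H(1) unfolding E_def continuous_on_iff by blast
    obtain d2 where d2: "d2 > 0" "\<And>s. s \<in> J \<Longrightarrow> dist s t < d2 \<Longrightarrow> dist (\<gamma>2 s) (\<gamma>2 t) < \<delta>"
      using assms(3) t H(1) unfolding E_def continuous_on_iff by blast
    show "\<exists>e>0. \<forall>s\<in>J. dist s t < e \<longrightarrow> s \<in> E"
    proof (intro exI[of _ "min d1 d2"] conjI ballI impI)
      show "min d1 d2 > 0" using d1 d2 by auto
      fix s assume s: "s \<in> J" "dist s t < min d1 d2"
      have "\<gamma>1 s \<in> ball a \<delta>" "\<gamma>2 s \<in> ball a \<delta>"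
        using d1(2)[OF s(1)] d2(2)[OF s(1)] s t unfolding E_def a_def by (auto simp: dist_commute)
      then have "norm (\<gamma>1 s - \<gamma>2 s) \<le> K * norm (f (\<gamma>1 s) - f (\<gamma>2 s))" using H by blast
      then show "s \<in> E" using assms(4)[OF s(1)] s unfolding E_def by auto
    qed
  qed
  moreover have "E \<noteq> {}" using assms unfolding E_def by auto
  ultimately have "E = J" using assms(1) unfolding connected_clopen by blast
  then show ?thesis using assms unfolding E_def by auto
qed

end


context gd begin

definition pth where "pth y0 x t = y0 + exp (-t) *\<^sub>R (f x - y0)"
definition lift_on where "lift_on y0 x T \<gamma> \<longleftrightarrow> continuous_on {0..T} \<gamma> \<and> \<gamma> 0 = x \<and> (\<forall>t\<in>{0..T}. f (\<gamma> t) = pth y0 x t)"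
definition vf where "vf y0 z = - Li z (f z - y0)"

lemma pth_cont: "continuous_on S (pth y0 x)"
  unfolding pth_def by (intro continuous_intros)

lemma pth_der: "(pth y0 x has_derivative (\<lambda>h. h *\<^sub>R (- exp (-t) *\<^sub>R (f x - y0)))) (at t within S)"
  unfolding pth_def by (auto intro!: derivative_eq_intros simp: algebra_simps)

lemma pth_0[simp]: "pth y0 x 0 = f x" unfolding pth_def by simp

lemma lift_restrict: "lift_on y0 x T \<gamma> \<Longrightarrow> T' \<le> T \<Longrightarrow> lift_on y0 x T' \<gamma>"
  unfolding lift_on_def by (metis (no_types, lifting) atLeastAtMost_iff atLeastatMost_subset_iff continuous_on_subset order.trans order_refl)

lemma lift_uniq:
  assumes "lift_on y0 x T \<gamma>1" "lift_on y0 x T \<gamma>2" "t \<in> {0..T}"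
  shows "\<gamma>1 t = \<gamma>2 t"
  using assms unfolding lift_on_def
  by (rule_tac uniq[of "{0..T}" \<gamma>1 \<gamma>2 0]) auto

lemma lift_deriv:
  assumes L: "lift_on y0 x T \<gamma>" and t: "t \<in> {0..T}"
  shows "(\<gamma> has_derivative (\<lambda>h. h *\<^sub>R vf y0 (\<gamma> t))) (at t within {0..T})"
proof -
  define a where "a = \<gamma> t"
  obtain \<delta> \<rho> K g where H: "0 < \<delta>" "0 < \<rho>" "0 < K"
     "\<forall>x1\<in>ball a \<delta>. \<forall>x2\<in>ball a \<delta>. norm (x1 - x2) \<le> K * norm (f x1 - f x2)"
     "\<forall>y\<in>ball (f a) \<rho>. g y \<in> ball a \<delta> \<and> f (g y) = y"
     "continuous_on (ball (f a) \<rho>) g"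
     "\<forall>z\<in>ball a \<delta>. f z \<in> ball (f a) \<rho> \<longrightarrow> g (f z) = z" "g (f a) = a"
    using LH2[of 1 a] by auto
  have fa: "f a = pth y0 x t" using L t unfolding lift_on_def a_def by auto
  have gder: "(g has_derivative blinfun_apply (Li a)) (at (f a))"
  proof (rule has_derivative_inverse_basic[where f=f and f'="blinfun_apply (f' a)" and T="ball (f a) \<rho>"])
    show "(f has_derivative blinfun_apply (f' a)) (at (g (f a)))" using deriv[of a] H(8) by simp
    show "bounded_linear (blinfun_apply (Li a))" by (rule blinfun.bounded_linear_right)
    show "blinfun_apply (Li a) \<circ> blinfun_apply (f' a) = id" by (auto simp: fun_eq_iff)
    show "continuous (at (f a)) g" using H(6) H(2)
      by (simp add: continuous_on_eq_continuous_at)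
  qed (use H in auto)
  have comp: "((\<lambda>s. g (pth y0 x s)) has_derivative (\<lambda>h. Li a (h *\<^sub>R (- exp (-t) *\<^sub>R (f x - y0))))) (at t within {0..T})"
    using has_derivative_compose[OF pth_der gder[unfolded fa]] .
  have eqd: "(\<lambda>h. Li a (h *\<^sub>R (- exp (-t) *\<^sub>R (f x - y0)))) = (\<lambda>h. h *\<^sub>R vf y0 (\<gamma> t))"
  proof -
    have "- exp (-t) *\<^sub>R (f x - y0) = - (f a - y0)" using fa unfolding pth_def by simp
    moreover have "Li a (y0 - f a) = - Li a (f a - y0)" by (metis blinfun.minus_right minus_diff_eq)
    ultimately show ?thesis unfolding vf_def a_def[symmetric]
      by (simp add: blinfun.scaleR_right blinfun.minus_right fun_eq_iff)
  qed
  have contg: "continuous (at t within {0..T}) \<gamma>"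
    using L t unfolding lift_on_def by (simp add: continuous_on_eq_continuous_within)
  obtain d1 where d1: "d1 > 0" "\<And>s. s \<in> {0..T} \<Longrightarrow> dist s t < d1 \<Longrightarrow> dist (\<gamma> s) a < \<delta>"
    using contg H(1) unfolding continuous_within_eps_delta a_def by blast
  obtain d2 where d2: "d2 > 0" "\<And>s. dist s t < d2 \<Longrightarrow> dist (pth y0 x s) (f a) < \<rho>"
    using pth_cont[of UNIV y0 x] H(2) unfolding continuous_on_iff fa by blast
  show ?thesis
  proof (rule has_derivative_transform_within[OF comp[unfolded eqd], of "min d1 d2"])
    show "0 < min d1 d2" using d1 d2 by auto
    show "t \<in> {0..T}" by fact
    fix s assume s: "s \<in> {0..T}" "dist s t < min d1 d2"
    have 1: "\<gamma> s \<in> ball a \<delta>" using d1(2)[OF s(1)] s by (simp add: dist_commute)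
    have 2: "f (\<gamma> s) \<in> ball (f a) \<rho>" using d2(2)[of s] s L unfolding lift_on_def
      by (auto simp: dist_commute)
    have "f (\<gamma> s) = pth y0 x s" using L s unfolding lift_on_def by auto
    then show "g (pth y0 x s) = \<gamma> s" using H(7) 1 2 by metis
  qed
qed

lemma lift_ext:
  assumes L: "lift_on y0 x T \<gamma>" and T: "T \<ge> 0"
  shows "\<exists>\<epsilon>>0. \<exists>\<gamma>'. lift_on y0 x (T + \<epsilon>) \<gamma>'"
proof -
  define a where "a = \<gamma> T"
  obtain \<delta> \<rho> K g where H0: "0 < \<delta>" "0 < \<rho>" "0 < K"
     "\<forall>x1\<in>ball a \<delta>. \<forall>x2\<in>ball a \<delta>. norm (x1 - x2) \<le> K * norm (f x1 - f x2)"
     "\<forall>y\<in>ball (f a) \<rho>. g y \<in> ball a \<delta> \<and> f (g y) = y"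
     "continuous_on (ball (f a) \<rho>) g"
     "\<forall>z\<in>ball a \<delta>. f z \<in> ball (f a) \<rho> \<longrightarrow> g (f z) = z" "g (f a) = a"
    using LH2[of 1 a] by auto
  note H = H0(1,2,3,5,6,8)
  have fa: "f a = pth y0 x T" using L T unfolding lift_on_def a_def by auto
  obtain d where d: "d > 0" "\<And>s. dist s T < d \<Longrightarrow> dist (pth y0 x s) (f a) < \<rho>"
    using pth_cont[of UNIV y0 x] H(2) unfolding continuous_on_iff fa by blast
  define \<gamma>' where "\<gamma>' s = (if s \<le> T then \<gamma> s else g (pth y0 x s))" for s
  have "lift_on y0 x (T + d/2) \<gamma>'"
    unfolding lift_on_def
  proof (intro conjI ballI)
    have c1: "continuous_on {s \<in> {0..T+d/2}. s \<le> T} \<gamma>"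
    proof -
      have "continuous_on {0..T} \<gamma>" using L unfolding lift_on_def by blast
      then show ?thesis by (rule continuous_on_subset) auto
    qed
    have sub: "pth y0 x ` {s \<in> {0..T+d/2}. T \<le> s} \<subseteq> ball (f a) \<rho>"
    proof
      fix z assume "z \<in> pth y0 x ` {s \<in> {0..T+d/2}. T \<le> s}"
      then obtain s where "s \<in> {0..T+d/2}" "T \<le> s" "z = pth y0 x s" by auto
      then have "dist s T < d" using d by (auto simp: dist_real_def)
      then show "z \<in> ball (f a) \<rho>" using d(2) \<open>z = _\<close> by (auto simp: dist_commute)
    qed
    have c2: "continuous_on {s \<in> {0..T+d/2}. T \<le> s} (\<lambda>s. g (pth y0 x s))"
      by (rule continuous_on_compose2[OF H(5) pth_cont sub])
    show "continuous_on {0..T + d/2} \<gamma>'"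
      unfolding \<gamma>'_def
    proof (rule continuous_on_cases_le[OF c1 c2])
      show "continuous_on {0..T + d / 2} (\<lambda>s. s)" by (rule continuous_on_id)
      fix s assume "s \<in> {0..T + d / 2}" "s = T"
      then show "\<gamma> s = g (pth y0 x s)" using H(6) fa a_def by simp
    qed
    show "\<gamma>' 0 = x" using L T unfolding lift_on_def \<gamma>'_def by auto
    fix s assume s: "s \<in> {0..T + d/2}"
    show "f (\<gamma>' s) = pth y0 x s"
    proof (cases "s \<le> T")
      case True then show ?thesis using L s unfolding lift_on_def \<gamma>'_def by auto
    next
      case False
      then have "dist s T < d" using s d by (auto simp: dist_real_def)
      then have "pth y0 x s \<in> ball (f a) \<rho>" using d(2) by (auto simp: dist_commute)
      then show ?thesis using H(4) False unfolding \<gamma>'_def by auto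
    qed
  qed
  then show ?thesis using d by (intro exI[of _ "d/2"]) auto
qed

end


lemma dini_bound:
  fixes \<phi> :: "real \<Rightarrow> real"
  assumes T: "T \<ge> 0" and cont: "continuous_on {0..T} \<phi>"
    and D: "\<And>t e. t \<in> {0..<T} \<Longrightarrow> e > 0 \<Longrightarrow> \<exists>d>0. \<forall>h. 0 < h \<and> h < d \<longrightarrow> \<phi> (t+h) \<le> \<phi> t + (C+e)*h"
    and t: "t \<in> {0..T}"
  shows "\<phi> t \<le> \<phi> 0 + C*t"
proof -
  have main: "\<phi> t \<le> \<phi> 0 + (C+e)*t" if e: "e > 0" and t: "t \<in> {0..T}" for e t
  proof -
    define A where "A = {s\<in>{0..T}. \<forall>r\<in>{0..s}. \<phi> r \<le> \<phi> 0 + (C+e)*r}"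
    have A0: "0 \<in> A" unfolding A_def using T by auto
    have Abdd: "bdd_above A" unfolding A_def by (auto intro: bdd_aboveI[of _ T])
    define m where "m = Sup A"
    have m0: "0 \<le> m" unfolding m_def using A0 Abdd by (meson cSup_upper)
    have mT: "m \<le> T" unfolding m_def using A0 by (intro cSup_least) (auto simp: A_def)
    have below: "\<phi> r \<le> \<phi> 0 + (C+e)*r" if "r \<in> {0..<m}" for r
    proof -
      from that have "r < Sup A" unfolding m_def by simp
      then obtain s where "s \<in> A" "r < s" using less_cSup_iff[OF _ Abdd] A0 by blast
      then show ?thesis using that unfolding A_def by auto
    qed
    have atm: "\<phi> m \<le> \<phi> 0 + (C+e)*m"
    proof (rule ccontr)
      assume neg: "\<not> ?thesis"
      then have m_pos: "m > 0" using m0 by (cases "m = 0") auto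
      define \<psi> where "\<psi> r = \<phi> r - (\<phi> 0 + (C+e)*r)" for r
      have "continuous_on {0..T} \<psi>" unfolding \<psi>_def by (intro continuous_intros cont)
      moreover have "m \<in> {0..T}" using m0 mT by auto
      moreover have "\<psi> m > 0" using neg unfolding \<psi>_def by simp
      ultimately obtain d where d: "d > 0" "\<And>r. r \<in> {0..T} \<Longrightarrow> dist r m < d \<Longrightarrow> dist (\<psi> r) (\<psi> m) < \<psi> m"
        unfolding continuous_on_iff by metis
      define r where "r = m - min (d/2) (m/2)"
      have r: "r \<in> {0..<m}" "r \<in> {0..T}" "dist r m < d" using d m_pos mT unfolding r_def by (auto simp: dist_real_def)
      have "\<psi> r > 0" using d(2)[OF r(2,3)] by (auto simp: dist_real_def)
      then show False using below[OF r(1)] unfolding \<psi>_def by simp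
    qed
    have mT': "m = T"
    proof (rule ccontr)
      assume "m \<noteq> T"
      then have mlt: "m < T" using mT by simp
      obtain d where d: "d > 0" "\<And>h. 0 < h \<and> h < d \<Longrightarrow> \<phi> (m+h) \<le> \<phi> m + (C+e)*h"
        using D[of m e] mlt m0 e by auto
      define h where "h = min (d/2) (T - m)"
      have h: "h > 0" "h < d" "m + h \<le> T" using d mlt unfolding h_def by auto
      have "m + h \<in> A" unfolding A_def
      proof (intro CollectI conjI ballI)
        show "m + h \<in> {0..T}" using h m0 by auto
        fix r assume r: "r \<in> {0..m+h}"
        show "\<phi> r \<le> \<phi> 0 + (C+e)*r"
        proof (cases "r \<le> m")
          case True then show ?thesis using below atm r by (cases "r = m") auto
        next
          case False
          then have "\<phi> (m + (r - m)) \<le> \<phi> m + (C+e)*(r-m)" using d(2)[of "r - m"] r h by auto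
          then have "\<phi> r \<le> \<phi> m + (C+e)*(r-m)" by simp
          also have "\<dots> \<le> \<phi> 0 + (C+e)*m + (C+e)*(r-m)" using atm by simp
          finally show ?thesis by (simp add: algebra_simps)
        qed
      qed
      then have "m + h \<le> m" unfolding m_def using Abdd by (rule cSup_upper)
      then show False using h by simp
    qed
    show ?thesis using t below atm mT' by (cases "t = m") auto
  qed
  show ?thesis
  proof (cases "t = 0")
    case True then show ?thesis by simp
  next
    case False
    then have tp: "t > 0" using t by auto
    show ?thesis
    proof (rule field_le_epsilon)
      fix e :: real assume "e > 0"
      then have "\<phi> t \<le> \<phi> 0 + (C + e/t)*t" using main[of "e/t" t] t tp by auto
      also have "\<dots> = \<phi> 0 + C*t + e" using tp by (simp add: algebra_simps)
      finally show "\<phi> t \<le> \<phi> 0 + C*t + e" .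
    qed
  qed
qed



locale gdk = gd f f' for f :: "'a::banach \<Rightarrow> 'b::banach" and f' +
  fixes x0 :: 'a and k :: "'a \<Rightarrow> real" and C :: real
  assumes kll: "locally_lipschitz k" and kco: "coercive k" and kdd: "has_right_dir_derivs k"
    and Cb: "\<And>x. right_dir_deriv k x (vf (f x0) x) \<le> C"
begin

lemma kbound:
  assumes L: "lift_on (f x0) x T \<gamma>" and T: "T \<ge> 0" and t: "t \<in> {0..T}"
  shows "k (\<gamma> t) \<le> k x + C * t"
proof -
  have kc: "continuous_on UNIV k" using kco unfolding coercive_def by auto
  have gc: "continuous_on {0..T} \<gamma>" using L unfolding lift_on_def by auto
  have g0: "\<gamma> 0 = x" using L unfolding lift_on_def by auto
  have "k (\<gamma> t) \<le> k (\<gamma> 0) + C * t"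
  proof (rule dini_bound[OF T _ _ t, where \<phi>="\<lambda>s. k (\<gamma> s)"])
    show "continuous_on {0..T} (\<lambda>s. k (\<gamma> s))"
      using continuous_on_compose2[OF kc gc] by auto
    fix s e :: real assume s: "s \<in> {0..<T}" and e: "e > 0"
    define z where "z = \<gamma> s"
    define w where "w = vf (f x0) z"
    obtain l where l: "((\<lambda>h. (k (z + h *\<^sub>R w) - k z) / h) \<longlongrightarrow> l) (at_right 0)"
      using kdd unfolding has_right_dir_derivs_def by blast
    have "right_dir_deriv k z w = l" unfolding right_dir_deriv_def
      using tendsto_Lim[OF trivial_limit_at_right_real l] .
    then have lC: "l \<le> C" using Cb[of z] unfolding w_def by simp
    have "\<forall>\<^sub>F h in at_right 0. (k (z + h *\<^sub>R w) - k z) / h < l + e/2"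
      using order_tendstoD(2)[OF l] e by simp
    then obtain d1 where d1: "d1 > 0" "\<And>h. 0 < h \<Longrightarrow> h < d1 \<Longrightarrow> (k (z + h *\<^sub>R w) - k z) / h < l + e/2"
      unfolding eventually_at_right_field by auto
    obtain U Lk where U: "open U" "z \<in> U" "Lk-lipschitz_on U k"
      using kll unfolding locally_lipschitz_def by blast
    have Lk0: "Lk \<ge> 0" using lipschitz_on_nonneg[OF U(3)] .
    obtain r where r: "r > 0" "ball z r \<subseteq> U" using U open_contains_ball by blast
    have sT: "s \<in> {0..T}" using s by auto
    have der: "(\<gamma> has_derivative (\<lambda>h. h *\<^sub>R w)) (at s within {0..T})"
      using lift_deriv[OF L sT] unfolding w_def z_def .
    define \<epsilon> where "\<epsilon> = e / (2 * (Lk + 1))"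
    have \<epsilon>: "\<epsilon> > 0" "Lk * \<epsilon> \<le> e/2" unfolding \<epsilon>_def using e Lk0
      by (auto simp: field_simps)
    obtain d2 where d2: "d2 > 0" "\<And>y. y \<in> {0..T} \<Longrightarrow> norm (y - s) < d2 \<Longrightarrow>
         norm (\<gamma> y - \<gamma> s - (y - s) *\<^sub>R w) \<le> \<epsilon> * norm (y - s)"
      using der \<epsilon>(1) unfolding has_derivative_within_alt by blast
    obtain d3 where d3: "d3 > 0" "\<And>y. y \<in> {0..T} \<Longrightarrow> dist y s < d3 \<Longrightarrow> dist (\<gamma> y) (\<gamma> s) < r"
      using gc sT r(1) unfolding continuous_on_iff by blast
    have nw: "norm w + 1 > 0" using norm_ge_zero[of w] by linarith
    define d where "d = min (min d1 d2) (min d3 (min (T - s) (r / (norm w + 1))))"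
    show "\<exists>d>0. \<forall>h. 0 < h \<and> h < d \<longrightarrow> k (\<gamma> (s + h)) \<le> k (\<gamma> s) + (C + e) * h"
    proof (intro exI[of _ d] conjI allI impI)
      have "norm w + 1 > 0" using norm_ge_zero[of w] by linarith
      then have "r / (norm w + 1) > 0" using r by simp
      then show "d > 0" unfolding d_def using d1 d2 d3 s r by auto
      fix h assume h: "0 < h \<and> h < d"
      have hT: "s + h \<in> {0..T}" using h s unfolding d_def by auto
      have a1: "\<gamma> (s+h) \<in> U" using d3(2)[OF hT] h r unfolding d_def z_def
        by (auto simp: dist_real_def dist_commute)
      have "norm (h *\<^sub>R w) < r"
      proof -
        have "h * norm w \<le> h * (norm w + 1)" using h by auto
        also have "\<dots> < r / (norm w + 1) * (norm w + 1)" using h unfolding d_def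
          by (intro mult_strict_right_mono) (use nw in auto)
        also have "\<dots> = r" using nw by simp
        finally show ?thesis using h by simp
      qed
      then have a2: "z + h *\<^sub>R w \<in> U" using r by (auto simp: dist_norm)
      have q1: "k (\<gamma> (s+h)) - k (z + h *\<^sub>R w) \<le> Lk * dist (\<gamma> (s+h)) (z + h *\<^sub>R w)"
        using lipschitz_onD[OF U(3) a1 a2] by (simp add: dist_real_def)
      have "dist (\<gamma> (s+h)) (z + h *\<^sub>R w) = norm (\<gamma> (s+h) - \<gamma> s - (s + h - s) *\<^sub>R w)"
        unfolding z_def dist_norm by (simp add: algebra_simps)
      also have "\<dots> \<le> \<epsilon> * norm (s + h - s)" using d2(2)[OF hT] h unfolding d_def by auto
      finally have q2: "dist (\<gamma> (s+h)) (z + h *\<^sub>R w) \<le> \<epsilon> * h" using h by simp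
      have p1: "k (\<gamma> (s+h)) - k (z + h *\<^sub>R w) \<le> Lk * \<epsilon> * h"
        using q1 mult_left_mono[OF q2 Lk0] by (simp add: mult.assoc)
      have p2: "k (z + h *\<^sub>R w) - k z \<le> (l + e/2) * h"
        using d1(2)[of h] h unfolding d_def by (simp add: pos_divide_less_eq)
      have "Lk * \<epsilon> * h \<le> e/2 * h" using \<epsilon> h by (intro mult_right_mono) auto
      show "k (\<gamma> (s + h)) \<le> k (\<gamma> s) + (C + e) * h"
      proof -
        have "l * h \<le> C * h" using lC h by (intro mult_right_mono) auto
        moreover have "(l + e/2)*h = l*h + e/2*h" "(C+e)*h = C*h + e/2*h + e/2*h" by (simp_all add: algebra_simps)
        ultimately show ?thesis using p1 p2 \<open>Lk * \<epsilon> * h \<le> e/2 * h\<close> unfolding z_def by linarith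
      qed
    qed
  qed
  then show ?thesis using g0 by simp
qed

lemma coer_bound: "\<exists>R>0. \<forall>z. k z \<le> B \<longrightarrow> norm z < R"
proof -
  have "filterlim k at_top at_infinity" using kco unfolding coercive_def by auto
  then have "\<forall>\<^sub>F z in at_infinity. B < k z" unfolding filterlim_at_top_dense by auto
  then obtain b where b: "\<And>z. b \<le> norm z \<Longrightarrow> B < k z" unfolding eventually_at_infinity by auto
  show ?thesis
    by (rule exI[of _ "max b 1"]) (use b in \<open>force simp: not_le[symmetric]\<close>)
qed

end


context gdk begin

lemma lift_lip:
  assumes T: "0 \<le> T" "T \<le> Tm" and L: "lift_on (f x0) x T \<gamma>"
    and M: "\<And>z. norm z < R \<Longrightarrow> norm (Li z) \<le> M"
    and R: "\<And>z. k z \<le> k x + \<bar>C\<bar> * Tm \<Longrightarrow> norm z < R"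
    and s: "s \<in> {0..T}" and t: "t \<in> {0..T}"
  shows "norm (\<gamma> s - \<gamma> t) \<le> (M * norm (f x - f x0)) * norm (s - t)"
proof (rule differentiable_bound[OF convex_closed_interval(1) lift_deriv[OF L] _ s t])
  fix \<tau> assume \<tau>: "\<tau> \<in> {0..T}"
  have "k (\<gamma> \<tau>) \<le> k x + C * \<tau>" using kbound[OF L T(1) \<tau>] .
  also have "C * \<tau> \<le> \<bar>C\<bar> * Tm" using \<tau> T
    by (metis abs_ge_self abs_ge_zero atLeastAtMost_iff mult_mono order_trans)
  finally have "norm (\<gamma> \<tau>) < R" using R by simp
  then have nM: "norm (Li (\<gamma> \<tau>)) \<le> M" using M by simp
  have M0: "0 \<le> M" using nM norm_ge_zero order_trans by blast
  have "f (\<gamma> \<tau>) = pth (f x0) x \<tau>" using L \<tau> unfolding lift_on_def by auto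
  then have "f (\<gamma> \<tau>) - f x0 = exp (-\<tau>) *\<^sub>R (f x - f x0)" unfolding pth_def by simp
  then have nf: "norm (f (\<gamma> \<tau>) - f x0) \<le> norm (f x - f x0)"
    using \<tau> by (simp add: mult_left_le_one_le)
  have "norm (vf (f x0) (\<gamma> \<tau>)) \<le> norm (Li (\<gamma> \<tau>)) * norm (f (\<gamma> \<tau>) - f x0)"
    unfolding vf_def by (simp add: norm_blinfun)
  also have "\<dots> \<le> M * norm (f x - f x0)" using nM nf M0 by (intro mult_mono) auto
  finally have nv: "norm (vf (f x0) (\<gamma> \<tau>)) \<le> M * norm (f x - f x0)" .
  show "onorm (\<lambda>h. h *\<^sub>R vf (f x0) (\<gamma> \<tau>)) \<le> M * norm (f x - f x0)"
  proof (rule onorm_bound)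
    show "0 \<le> M * norm (f x - f x0)" using M0 by simp
    fix h :: real
    show "norm (h *\<^sub>R vf (f x0) (\<gamma> \<tau>)) \<le> M * norm (f x - f x0) * norm h"
      using nv by (simp add: mult_left_mono mult.commute)
  qed
qed

lemma lift_lim:
  assumes Tm: "Tm > 0" and all: "\<And>T. 0 \<le> T \<Longrightarrow> T < Tm \<Longrightarrow> \<exists>\<gamma>. lift_on (f x0) x T \<gamma>"
  shows "\<exists>\<gamma>. lift_on (f x0) x Tm \<gamma>"
proof -
  define y0 where "y0 = f x0"
  obtain R where R0: "R > 0" and R: "\<And>z. k z \<le> k x + \<bar>C\<bar> * Tm \<Longrightarrow> norm z < R"
    using coer_bound[of "k x + \<bar>C\<bar> * Tm"] by blast
  obtain M where M': "\<And>z. z \<in> cball 0 R \<Longrightarrow> norm (Li z) \<le> M"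
    using bdd_inv[OF R0] unfolding bdd_above_def by blast
  have M: "\<And>z. norm z < R \<Longrightarrow> norm (Li z) \<le> M" using M' by auto
  define L where "L = M * norm (f x - y0)"
  have "norm (Li 0) \<le> M" using M[of 0] R0 by simp
  then have "0 \<le> M" using norm_ge_zero order_trans by blast
  then have L0: "L \<ge> 0" unfolding L_def by simp
  define \<Gamma> where "\<Gamma> t = (SOME \<gamma>. lift_on y0 x t \<gamma>) t" for t
  have \<Gamma>eq: "\<Gamma> t = \<gamma> t" if "0 \<le> T" "T < Tm" "lift_on y0 x T \<gamma>" "t \<in> {0..T}" for T \<gamma> t
  proof -
    have ex: "\<exists>\<gamma>'. lift_on y0 x t \<gamma>'" using lift_restrict[OF that(3)] that(4) by auto
    have "lift_on y0 x t (SOME \<gamma>. lift_on y0 x t \<gamma>)" using someI_ex[OF ex] .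
    moreover have "lift_on y0 x t \<gamma>" using lift_restrict[OF that(3)] that(4) by auto
    ultimately show ?thesis unfolding \<Gamma>_def using that(4) by (intro lift_uniq) auto
  qed
  have \<Gamma>L: "norm (\<Gamma> s - \<Gamma> t) \<le> L * \<bar>s - t\<bar>" if "s \<in> {0..<Tm}" "t \<in> {0..<Tm}" for s t
  proof -
    have "0 \<le> max s t" "max s t < Tm" using that by auto
    then obtain \<gamma> where g: "lift_on y0 x (max s t) \<gamma>" using all[of "max s t"] unfolding y0_def by blast
    have "norm (\<Gamma> s - \<Gamma> t) = norm (\<gamma> s - \<gamma> t)"
      using \<Gamma>eq[OF _ _ g, of s] \<Gamma>eq[OF _ _ g, of t] that by auto
    also have "\<dots> \<le> L * norm (s - t)"
    proof -
      have gg: "lift_on (f x0) x (max s t) \<gamma>" using g unfolding y0_def .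
      have "max s t \<le> Tm" "0 \<le> max s t" "s \<in> {0..max s t}" "t \<in> {0..max s t}" using that by auto
      from lift_lip[OF this(2,1) gg M R this(3,4)] show ?thesis unfolding L_def y0_def by simp
    qed
    finally show ?thesis by simp
  qed
  define u where "u n = Tm - Tm / (2 + real n)" for n
  have u_in: "u n \<in> {0..<Tm}" for n
  proof -
    have "Tm / (2 + real n) \<le> Tm" using Tm by (simp add: divide_le_eq)
    moreover have "Tm / (2 + real n) > 0" using Tm by simp
    ultimately show ?thesis unfolding u_def by auto
  qed
  have u_lim: "u \<longlonglongrightarrow> Tm"
  proof -
    have "filterlim (\<lambda>n. 2 + real n) at_top sequentially"
      by (rule filterlim_tendsto_add_at_top[OF tendsto_const filterlim_real_sequentially])
    then have "(\<lambda>n. Tm / (2 + real n)) \<longlonglongrightarrow> 0"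
      by (intro tendsto_divide_0[OF tendsto_const] filterlim_at_top_imp_at_infinity)
    then have "(\<lambda>n. Tm - Tm / (2 + real n)) \<longlonglongrightarrow> Tm - 0" by (intro tendsto_diff tendsto_const)
    then show ?thesis unfolding u_def by simp
  qed
  have "Cauchy (\<lambda>n. \<Gamma> (u n))"
  proof (rule metric_CauchyI)
    fix e :: real assume e: "e > 0"
    have "e / (L + 1) > 0" using e L0 by simp
    then obtain N where N: "\<And>m n. m \<ge> N \<Longrightarrow> n \<ge> N \<Longrightarrow> dist (u m) (u n) < e / (L + 1)"
      using metric_CauchyD[OF LIMSEQ_imp_Cauchy[OF u_lim]] by blast
    show "\<exists>N. \<forall>m\<ge>N. \<forall>n\<ge>N. dist (\<Gamma> (u m)) (\<Gamma> (u n)) < e"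
    proof (intro exI[of _ N] allI impI)
      fix m n assume mn: "m \<ge> N" "n \<ge> N"
      have "dist (\<Gamma> (u m)) (\<Gamma> (u n)) \<le> L * \<bar>u m - u n\<bar>"
        using \<Gamma>L[OF u_in u_in] by (simp add: dist_norm)
      also have "\<dots> \<le> L * (e / (L + 1))" using N[OF mn] L0
        by (intro mult_left_mono) (auto simp: dist_real_def)
      also have "\<dots> < e" using e L0 by (simp add: field_simps)
      finally show "dist (\<Gamma> (u m)) (\<Gamma> (u n)) < e" .
    qed
  qed
  then obtain a where a: "(\<lambda>n. \<Gamma> (u n)) \<longlonglongrightarrow> a"
    using Cauchy_convergent convergent_def by blast
  have bnd: "norm (\<Gamma> t - a) \<le> L * (Tm - t)" if t: "t \<in> {0..<Tm}" for t
  proof -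
    have 1: "(\<lambda>n. norm (\<Gamma> t - \<Gamma> (u n))) \<longlonglongrightarrow> norm (\<Gamma> t - a)"
      by (intro tendsto_norm tendsto_diff tendsto_const a)
    have 2: "(\<lambda>n. L * \<bar>t - u n\<bar>) \<longlonglongrightarrow> L * \<bar>t - Tm\<bar>"
      by (intro tendsto_mult tendsto_rabs tendsto_diff tendsto_const u_lim)
    have "norm (\<Gamma> t - a) \<le> L * \<bar>t - Tm\<bar>"
      by (rule LIMSEQ_le[OF 1 2]) (use \<Gamma>L[OF t u_in] in auto)
    then show ?thesis using t by simp
  qed
  define \<gamma>' where "\<gamma>' t = (if t < Tm then \<Gamma> t else a)" for t
  have lip: "norm (\<gamma>' s - \<gamma>' t) \<le> L * \<bar>s - t\<bar>" if "s \<in> {0..Tm}" "t \<in> {0..Tm}" for s t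
  proof (cases "s < Tm"; cases "t < Tm")
    assume "s < Tm" "t < Tm" then show ?thesis using \<Gamma>L that unfolding \<gamma>'_def by auto
  next
    assume "s < Tm" "\<not> t < Tm" then show ?thesis using bnd[of s] that unfolding \<gamma>'_def by auto
  next
    assume "\<not> s < Tm" "t < Tm" then show ?thesis using bnd[of t] that unfolding \<gamma>'_def
      by (auto simp: norm_minus_commute)
  next
    assume "\<not> s < Tm" "\<not> t < Tm" then show ?thesis using L0 unfolding \<gamma>'_def by auto
  qed
  have "lift_on y0 x Tm \<gamma>'"
    unfolding lift_on_def
  proof (intro conjI ballI)
    show "continuous_on {0..Tm} \<gamma>'"
      by (rule lipschitz_on_continuous_on[of L]) (use lip L0 in \<open>auto intro!: lipschitz_onI simp: dist_norm\<close>)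
    obtain \<gamma>0 where g0: "lift_on y0 x 0 \<gamma>0" using all[of 0] Tm unfolding y0_def by auto
    show "\<gamma>' 0 = x" using \<Gamma>eq[OF _ Tm g0, of 0] g0 Tm unfolding \<gamma>'_def lift_on_def by auto
    fix t assume t: "t \<in> {0..Tm}"
    show "f (\<gamma>' t) = pth y0 x t"
    proof (cases "t < Tm")
      case True
      obtain \<gamma> where g: "lift_on y0 x t \<gamma>" using all[of t] t True unfolding y0_def by auto
      show ?thesis using \<Gamma>eq[OF _ True g, of t] g t True unfolding \<gamma>'_def lift_on_def by auto
    next
      case False
      then have tT: "t = Tm" using t by auto
      have c1: "(\<lambda>n. f (\<Gamma> (u n))) \<longlonglongrightarrow> f a"
      proof -
        have "isCont f a" using f_cont[of UNIV] by (simp add: continuous_on_eq_continuous_at)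
        from isCont_tendsto_compose[OF this a] show ?thesis .
      qed
      have "(\<lambda>n. pth y0 x (u n)) \<longlonglongrightarrow> pth y0 x Tm"
      proof -
        have "isCont (pth y0 x) Tm" using pth_cont[of UNIV y0 x] by (simp add: continuous_on_eq_continuous_at)
        from isCont_tendsto_compose[OF this u_lim] show ?thesis .
      qed
      moreover have "f (\<Gamma> (u n)) = pth y0 x (u n)" for n
      proof -
        obtain \<gamma> where g: "lift_on y0 x (u n) \<gamma>" using all[of "u n"] u_in[of n] unfolding y0_def by auto
        show ?thesis using \<Gamma>eq[OF _ _ g, of "u n"] g u_in[of n] unfolding lift_on_def by auto
      qed
      ultimately have "(\<lambda>n. f (\<Gamma> (u n))) \<longlonglongrightarrow> pth y0 x Tm" by simp
      then have "f a = pth y0 x Tm" using c1 LIMSEQ_unique by blast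
      then show ?thesis using tT unfolding \<gamma>'_def by simp
    qed
  qed
  then show ?thesis unfolding y0_def by blast
qed

lemma lift_exists:
  assumes "T \<ge> 0" shows "\<exists>\<gamma>. lift_on (f x0) x T \<gamma>"
proof (rule ccontr)
  assume neg: "\<not> ?thesis"
  define A where "A = {T. T \<ge> 0 \<and> (\<exists>\<gamma>. lift_on (f x0) x T \<gamma>)}"
  have down: "T' \<in> A" if TT: "T \<in> A" "0 \<le> T'" "T' \<le> T" for T T'
  proof -
    obtain \<gamma> where "lift_on (f x0) x T \<gamma>" using TT(1) unfolding A_def by blast
    then have "lift_on (f x0) x T' \<gamma>" using TT(3) by (rule lift_restrict)
    then show ?thesis using TT(2) unfolding A_def by blast
  qed
  have "lift_on (f x0) x 0 (\<lambda>_. x)" unfolding lift_on_def by simp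
  then have A0: "0 \<in> A" unfolding A_def by blast
  have Ab: "\<forall>S\<in>A. S < T"
  proof
    fix S assume "S \<in> A"
    show "S < T"
    proof (rule ccontr)
      assume "\<not> S < T"
      then have "T \<le> S" by simp
      then have "T \<in> A" using down[OF \<open>S \<in> A\<close> assms] by simp
      then show False using neg unfolding A_def by auto
    qed
  qed
  then have "\<forall>S\<in>A. S \<le> T" by (simp add: less_imp_le)
  then have bdd: "bdd_above A" unfolding bdd_above_def by blast
  define m where "m = Sup A"
  have m0: "0 \<le> m" unfolding m_def by (rule cSup_upper[OF A0 bdd])
  have below: "S \<in> A" if "0 \<le> S" "S < m" for S
  proof -
    have ne: "A \<noteq> {}" using A0 by blast
    have "S < Sup A" using that(2) unfolding m_def .
    then obtain s where "s \<in> A" "S < s" using less_cSup_iff[OF ne bdd] by blast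
    then show ?thesis using down[of s S] that(1) by simp
  qed
  have "m \<in> A"
  proof (cases "m = 0")
    case True then show ?thesis using A0 by simp
  next
    case False
    then have "m > 0" using m0 by simp
    have "\<exists>\<gamma>. lift_on (f x0) x m \<gamma>"
    proof (rule lift_lim[OF \<open>m > 0\<close>])
      fix T assume "0 \<le> T" "T < m"
      then have "T \<in> A" by (rule below)
      then show "\<exists>\<gamma>. lift_on (f x0) x T \<gamma>" unfolding A_def by blast
    qed
    then show ?thesis using m0 unfolding A_def by blast
  qed
  then obtain \<gamma> where "lift_on (f x0) x m \<gamma>" unfolding A_def by auto
  from lift_ext[OF this m0] obtain \<epsilon> \<gamma>' where "\<epsilon> > 0" "lift_on (f x0) x (m + \<epsilon>) \<gamma>'" by blast
  then have "m + \<epsilon> \<in> A" unfolding A_def using m0 by auto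
  then have "m + \<epsilon> \<le> m" unfolding m_def using bdd by (rule cSup_upper)
  then show False using \<open>\<epsilon> > 0\<close> by simp
qed

end


locale gd2 = gd f f' for f :: "'a::banach \<Rightarrow> 'b::banach" and f' +
  fixes x0 :: 'a
  assumes complete: "\<And>x T. T \<ge> 0 \<Longrightarrow> \<exists>\<gamma>. lift_on (f x0) x T \<gamma>"
begin

definition G where "G x t = (SOME \<gamma>. lift_on (f x0) x t \<gamma>) t"

lemma G_eq:
  assumes L: "lift_on (f x0) x T \<gamma>" and t: "t \<in> {0..T}"
  shows "G x t = \<gamma> t"
proof -
  have ex: "\<exists>\<gamma>'. lift_on (f x0) x t \<gamma>'" using complete t by auto
  have "lift_on (f x0) x t (SOME \<gamma>. lift_on (f x0) x t \<gamma>)" using someI_ex[OF ex] .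
  moreover have "lift_on (f x0) x t \<gamma>" using lift_restrict[OF L] t by auto
  ultimately show ?thesis unfolding G_def using t by (intro lift_uniq) auto
qed

lemma G_lift: assumes "T \<ge> 0" shows "lift_on (f x0) x T (G x)"
proof -
  obtain \<gamma> where L: "lift_on (f x0) x T \<gamma>" using complete assms by blast
  have eq: "\<And>t. t \<in> {0..T} \<Longrightarrow> G x t = \<gamma> t" using G_eq[OF L] .
  show ?thesis unfolding lift_on_def
  proof (intro conjI ballI)
    show "continuous_on {0..T} (G x)"
      using L unfolding lift_on_def by (metis (no_types, lifting) continuous_on_cong eq)
    show "G x 0 = x" using eq[of 0] L assms unfolding lift_on_def by auto
    fix t assume "t \<in> {0..T}" then show "f (G x t) = pth (f x0) x t"
      using eq L unfolding lift_on_def by auto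
  qed
qed

lemma G_f: "t \<ge> 0 \<Longrightarrow> f (G x t) = pth (f x0) x t"
  using G_lift[of t x] unfolding lift_on_def by auto

lemma G_0[simp]: "G x 0 = x"
  using G_lift[of 0 x] unfolding lift_on_def by auto

lemma G_cont: "T \<ge> 0 \<Longrightarrow> continuous_on {0..T} (G x)"
  using G_lift[of T x] unfolding lift_on_def by auto

lemma G_semi:
  assumes t: "t \<ge> 0" and \<tau>: "\<tau> \<ge> 0"
  shows "G (G x t) \<tau> = G x (t + \<tau>)"
proof -
  have "lift_on (f x0) (G x t) \<tau> (\<lambda>\<sigma>. G x (t + \<sigma>))"
    unfolding lift_on_def
  proof (intro conjI ballI)
    have c: "continuous_on {0..\<tau>} (\<lambda>\<sigma>. t + \<sigma>)" by (intro continuous_intros)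
    have im: "(\<lambda>\<sigma>. t + \<sigma>) ` {0..\<tau>} \<subseteq> {0..t+\<tau>}" using t by auto
    have "t + \<tau> \<ge> 0" using t \<tau> by simp
    from continuous_on_compose2[OF G_cont[OF this, of x] c im]
    show "continuous_on {0..\<tau>} (\<lambda>\<sigma>. G x (t + \<sigma>))" .
    show "G x (t + 0) = G x t" by simp
    fix \<sigma> assume \<sigma>: "\<sigma> \<in> {0..\<tau>}"
    have "f (G x (t + \<sigma>)) = pth (f x0) x (t + \<sigma>)" using G_f \<sigma> t by auto
    also have "\<dots> = pth (f x0) (G x t) \<sigma>"
    proof -
      have h: "f (G x t) - f x0 = exp (-t) *\<^sub>R (f x - f x0)" using G_f[OF t, of x] unfolding pth_def by simp
      have "exp (-(t+\<sigma>)) = exp (-\<sigma>) * exp (-t)" by (simp add: exp_add[symmetric])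
      then show ?thesis unfolding pth_def h by simp
    qed
    finally show "f (G x (t + \<sigma>)) = pth (f x0) (G x t) \<sigma>" .
  qed
  then show ?thesis using G_eq[of "G x t" \<tau> "\<lambda>\<sigma>. G x (t + \<sigma>)" \<tau>] \<tau> by auto
qed

definition Good where "Good x t \<longleftrightarrow> (\<forall>\<epsilon>>0. \<exists>\<eta>>0. \<forall>x'. dist x' x < \<eta> \<longrightarrow> dist (G x' t) (G x t) < \<epsilon>)"

lemma Good0: "Good x 0" unfolding Good_def by auto

lemma Good_loc:
  assumes ts: "ts \<ge> 0"
  shows "\<exists>e'>0. \<forall>\<tau> s. 0 \<le> \<tau> \<longrightarrow> ts - e' \<le> \<tau> \<longrightarrow> \<tau> \<le> ts \<longrightarrow> Good x \<tau> \<longrightarrow> \<tau> \<le> s \<longrightarrow> s \<le> ts + e' \<longrightarrow> Good x s"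
proof -
  define a where "a = G x ts"
  obtain \<delta> \<rho> K g where H: "0 < \<delta>" "0 < \<rho>" "0 < K"
     "\<forall>x1\<in>ball a \<delta>. \<forall>x2\<in>ball a \<delta>. norm (x1 - x2) \<le> K * norm (f x1 - f x2)"
     "\<forall>y\<in>ball (f a) \<rho>. g y \<in> ball a \<delta> \<and> f (g y) = y"
     "\<forall>y1\<in>ball (f a) \<rho>. \<forall>y2\<in>ball (f a) \<rho>. norm (g y1 - g y2) \<le> K * norm (y1 - y2)"
     "continuous_on (ball (f a) \<rho>) g"
     "\<forall>z\<in>ball a \<delta>. f z \<in> ball (f a) \<rho> \<longrightarrow> g (f z) = z"
    using LH2[of 1 a] by auto
  have fa: "f a = pth (f x0) x ts" using G_f ts unfolding a_def by auto
  obtain e1 where e1: "e1 > 0" "\<And>s. s \<in> {0..ts+1} \<Longrightarrow> dist s ts < e1 \<Longrightarrow> dist (G x s) a < \<delta>/2"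
  proof -
    have "continuous_on {0..ts+1} (G x)" using G_cont[of "ts+1" x] ts by simp
    moreover have "ts \<in> {0..ts+1}" using ts by simp
    moreover have "\<delta>/2 > 0" using H(1) by simp
    ultimately show ?thesis using that unfolding continuous_on_iff a_def by metis
  qed
  obtain e2 where e2: "e2 > 0" "\<And>s. dist s ts < e2 \<Longrightarrow> dist (pth (f x0) x s) (f a) < \<rho>/2"
    using pth_cont[of UNIV "f x0" x] H(2) unfolding continuous_on_iff fa
    by (metis UNIV_I half_gt_zero)
  define e' where "e' = min (min e1 e2) 1 / 2"
  have e': "e' > 0" "e' < e1" "e' < e2" "e' \<le> 1" using e1 e2 unfolding e'_def by auto
  show ?thesis
  proof (intro exI[of _ e'] conjI allI impI)
    show "e' > 0" by fact
    fix \<tau> s assume \<tau>: "0 \<le> \<tau>" "ts - e' \<le> \<tau>" "\<tau> \<le> ts" and G\<tau>: "Good x \<tau>" and s: "\<tau> \<le> s" "s \<le> ts + e'"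
    have near: "dist \<sigma> ts < e1" "dist \<sigma> ts < e2" "\<sigma> \<in> {0..ts+1}" if "\<tau> \<le> \<sigma>" "\<sigma> \<le> ts + e'" for \<sigma>
      using that \<tau> e' by (auto simp: dist_real_def)
    show "Good x s" unfolding Good_def
    proof (intro allI impI)
      fix \<epsilon> :: real assume \<epsilon>: "\<epsilon> > 0"
      obtain \<eta>1 where \<eta>1: "\<eta>1 > 0" "\<And>x'. dist x' x < \<eta>1 \<Longrightarrow> dist (G x' \<tau>) (G x \<tau>) < \<delta>/2"
        using G\<tau> H(1) unfolding Good_def by (metis half_gt_zero)
      have "min (\<rho>/2) (\<epsilon>/K) > 0" using H \<epsilon> by simp
      then obtain \<eta>2 where \<eta>2: "\<eta>2 > 0" "\<And>x'. dist x' x < \<eta>2 \<Longrightarrow> dist (f x') (f x) < min (\<rho>/2) (\<epsilon>/K)"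
        using f_cont[of UNIV] unfolding continuous_on_iff by (metis UNIV_I)
      show "\<exists>\<eta>>0. \<forall>x'. dist x' x < \<eta> \<longrightarrow> dist (G x' s) (G x s) < \<epsilon>"
      proof (intro exI[of _ "min \<eta>1 \<eta>2"] conjI allI impI)
        show "min \<eta>1 \<eta>2 > 0" using \<eta>1 \<eta>2 by simp
        fix x' assume x': "dist x' x < min \<eta>1 \<eta>2"
        have fx': "norm (f x' - f x) < \<rho>/2" "norm (f x' - f x) < \<epsilon>/K" using \<eta>2(2)[of x'] x' by (auto simp: dist_norm)
        have pclose: "norm (pth (f x0) x' \<sigma> - pth (f x0) x \<sigma>) \<le> norm (f x' - f x)" if "\<sigma> \<ge> 0" for \<sigma>
        proof -
          have "pth (f x0) x' \<sigma> - pth (f x0) x \<sigma> = exp (-\<sigma>) *\<^sub>R (f x' - f x)" unfolding pth_def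
            by (simp add: algebra_simps)
          then show ?thesis using that by (simp add: mult_left_le_one_le)
        qed
        have pin: "pth (f x0) x' \<sigma> \<in> ball (f a) \<rho>" if "\<tau> \<le> \<sigma>" "\<sigma> \<le> ts + e'" for \<sigma>
        proof -
          have "dist (pth (f x0) x \<sigma>) (f a) < \<rho>/2" using e2(2) near(2)[OF that] by blast
          moreover have "norm (pth (f x0) x' \<sigma> - pth (f x0) x \<sigma>) < \<rho>/2"
            using pclose[of \<sigma>] fx'(1) that \<tau> by auto
          ultimately show ?thesis unfolding dist_norm mem_ball
            using norm_triangle_ineq[of "pth (f x0) x' \<sigma> - pth (f x0) x \<sigma>" "pth (f x0) x \<sigma> - f a"]
            by (simp add: norm_minus_commute)
        qed
        define \<phi> where "\<phi> \<sigma> = g (pth (f x0) x' \<sigma>)" for \<sigma>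
        have Gx'\<tau>: "G x' \<tau> \<in> ball a \<delta>"
        proof -
          have "dist (G x \<tau>) a < \<delta>/2" using e1(2) near[of \<tau>] \<tau> s by auto
          moreover have "dist (G x' \<tau>) (G x \<tau>) < \<delta>/2" using \<eta>1(2)[of x'] x' by auto
          ultimately show ?thesis by (metis dist_commute dist_triangle_half_r mem_ball)
        qed
        have eq': "G x' \<sigma> = \<phi> \<sigma>" if "\<sigma> \<in> {\<tau>..ts+e'}" for \<sigma>
        proof (rule uniq[of "{\<tau>..ts+e'}" "G x'" \<phi> \<tau>])
          show "connected {\<tau>..ts+e'}" by simp
          show "continuous_on {\<tau>..ts + e'} (G x')"
          proof -
            have "continuous_on {0..ts+e'} (G x')" using G_cont[of "ts+e'" x'] ts e' by simp
            then show ?thesis by (rule continuous_on_subset) (use \<tau> in auto)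
          qed
          have "pth (f x0) x' ` {\<tau>..ts + e'} \<subseteq> ball (f a) \<rho>" using pin by auto
          then show "continuous_on {\<tau>..ts + e'} \<phi>" unfolding \<phi>_def
            by (rule continuous_on_compose2[OF H(7) pth_cont])
          fix t assume "t \<in> {\<tau>..ts + e'}"
          then show "f (G x' t) = f (\<phi> t)" unfolding \<phi>_def using H(5) pin G_f[of t x'] \<tau> by auto
        next
          show "\<tau> \<in> {\<tau>..ts + e'}" using \<tau> s by auto
          have "f (G x' \<tau>) = pth (f x0) x' \<tau>" using G_f \<tau> by auto
          then have "f (G x' \<tau>) \<in> ball (f a) \<rho>" using pin[of \<tau>] \<tau> s by auto
          then show "G x' \<tau> = \<phi> \<tau>" unfolding \<phi>_def using H(8) Gx'\<tau> \<open>f (G x' \<tau>) = _\<close> by metis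
        qed (use that in auto)
        have "G x s \<in> ball a \<delta>" using e1(2)[OF near(3)[OF s] near(1)[OF s]] H(1) by (auto simp: dist_commute)
        moreover have "f (G x s) = pth (f x0) x s" using G_f \<tau> s by auto
        moreover have "pth (f x0) x s \<in> ball (f a) \<rho>"
          using e2(2)[OF near(2)[OF s]] H(2) by (auto simp: dist_commute)
        ultimately have GxS: "G x s = g (pth (f x0) x s)" using H(8) by metis
        have "dist (G x' s) (G x s) = norm (g (pth (f x0) x' s) - g (pth (f x0) x s))"
          using eq'[of s] s GxS unfolding \<phi>_def by (auto simp: dist_norm)
        also have "\<dots> \<le> K * norm (pth (f x0) x' s - pth (f x0) x s)"
          using H(6) pin[OF s] \<open>pth (f x0) x s \<in> ball (f a) \<rho>\<close> by blast
        also have "\<dots> \<le> K * norm (f x' - f x)" using pclose[of s] s \<tau> H(3) by (intro mult_left_mono) auto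
        also have "\<dots> < K * (\<epsilon>/K)" using fx'(2) H(3) by (intro mult_strict_left_mono) auto
        also have "\<dots> = \<epsilon>" using H(3) by simp
        finally show "dist (G x' s) (G x s) < \<epsilon>" .
      qed
    qed
  qed
qed

end


context gd2 begin

lemma Good_all: assumes "t \<ge> 0" shows "Good x t"
proof (rule ccontr)
  assume neg: "\<not> Good x t"
  define N where "N = {t. t \<ge> 0 \<and> \<not> Good x t}"
  have tN: "t \<in> N" using neg assms unfolding N_def by auto
  have bdd: "bdd_below N" unfolding N_def bdd_below_def by auto
  define m where "m = Inf N"
  have m0: "m \<ge> 0" unfolding m_def using tN by (intro cInf_greatest) (auto simp: N_def)
  have below: "Good x s" if "0 \<le> s" "s < m" for s
  proof (rule ccontr)
    assume "\<not> Good x s"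
    then have "s \<in> N" using that unfolding N_def by auto
    then have "m \<le> s" unfolding m_def using bdd by (rule cInf_lower)
    then show False using that by simp
  qed
  obtain e' where e': "e' > 0" and loc: "\<And>\<tau> s. 0 \<le> \<tau> \<Longrightarrow> m - e' \<le> \<tau> \<Longrightarrow> \<tau> \<le> m \<Longrightarrow> Good x \<tau> \<Longrightarrow> \<tau> \<le> s \<Longrightarrow> s \<le> m + e' \<Longrightarrow> Good x s"
    using Good_loc[OF m0, of x] by blast
  define \<tau> where "\<tau> = max 0 (m - e'/2)"
  have \<tau>: "0 \<le> \<tau>" "m - e' \<le> \<tau>" "\<tau> \<le> m" unfolding \<tau>_def using m0 e' by auto
  have G\<tau>: "Good x \<tau>"
  proof (cases "\<tau> < m")
    case True then show ?thesis using below \<tau> by auto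
  next
    case False
    then have "\<tau> = 0" unfolding \<tau>_def using e' by (auto simp: max_def split: if_splits)
    then show ?thesis using Good0 by simp
  qed
  have "N \<noteq> {}" using tN by auto
  moreover have "Inf N < m + e'" unfolding m_def using e' by simp
  ultimately obtain n where n: "n \<in> N" "n < m + e'" using cInf_less_iff[OF _ bdd] by blast
  have "m \<le> n" unfolding m_def using bdd n(1) by (intro cInf_lower)
  then have "Good x n" using loc[OF \<tau> G\<tau>, of n] n \<tau> by auto
  then show False using n unfolding N_def by auto
qed

lemma G_cont_x: assumes "t \<ge> 0" shows "continuous_on UNIV (\<lambda>x. G x t)"
  unfolding continuous_on_iff using Good_all[OF assms] unfolding Good_def by blast

theorem inj_f: "inj f"
proof -
  obtain \<delta>0 \<rho>0 K0 g0 where H: "0 < \<delta>0" "0 < \<rho>0" "0 < K0"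
     "\<forall>x1\<in>ball x0 \<delta>0. \<forall>x2\<in>ball x0 \<delta>0. norm (x1 - x2) \<le> K0 * norm (f x1 - f x2)"
     "\<forall>y\<in>ball (f x0) \<rho>0. g0 y \<in> ball x0 \<delta>0 \<and> f (g0 y) = y"
     "\<forall>y1\<in>ball (f x0) \<rho>0. \<forall>y2\<in>ball (f x0) \<rho>0. norm (g0 y1 - g0 y2) \<le> K0 * norm (y1 - y2)"
     "continuous_on (ball (f x0) \<rho>0) g0"
     "\<forall>z\<in>ball x0 \<delta>0. f z \<in> ball (f x0) \<rho>0 \<longrightarrow> g0 (f z) = z"
    using LH2[of 1 x0] by auto
  define U0 where "U0 = ball x0 \<delta>0"
  define B0 where "B0 = ball (f x0) \<rho>0"
  define S where "S = {x. \<exists>t\<ge>0. G x t \<in> U0 \<and> f (G x t) \<in> B0}"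
  have F2: "G x t' \<in> U0 \<and> f (G x t') \<in> B0 \<and> G x t' = g0 (f (G x t'))"
    if t: "t \<ge> 0" "G x t \<in> U0" "f (G x t) \<in> B0" and t': "t \<le> t'" for x t t'
  proof -
    have inB: "f (G x \<sigma>) \<in> B0" if "t \<le> \<sigma>" for \<sigma>
    proof -
      have e1: "f (G x t) - f x0 = exp (-t) *\<^sub>R (f x - f x0)" using G_f[of t x] t unfolding pth_def by simp
      have "f (G x \<sigma>) - f x0 = exp (-\<sigma>) *\<^sub>R (f x - f x0)" using G_f[of \<sigma> x] t that unfolding pth_def by simp
      also have "\<dots> = exp (-(\<sigma> - t)) *\<^sub>R (f (G x t) - f x0)" unfolding e1
        by (simp add: exp_add[symmetric])
      finally have "norm (f (G x \<sigma>) - f x0) \<le> norm (f (G x t) - f x0)"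
        using that by (simp add: mult_left_le_one_le)
      then show ?thesis using t(3) unfolding B0_def by (simp add: dist_norm norm_minus_commute)
    qed
    have eq: "G x \<sigma> = g0 (f (G x \<sigma>))" if "\<sigma> \<in> {t..t'}" for \<sigma>
    proof (rule uniq[of "{t..t'}" "G x" "\<lambda>\<sigma>. g0 (f (G x \<sigma>))" t])
      show "connected {t..t'}" by simp
      have cG: "continuous_on {t..t'} (G x)"
      proof -
        have "continuous_on {0..t'} (G x)" using G_cont[of t' x] t t' by simp
        then show ?thesis by (rule continuous_on_subset) (use t in auto)
      qed
      show "continuous_on {t..t'} (G x)" by (rule cG)
      have "continuous_on {t..t'} (\<lambda>\<sigma>. f (G x \<sigma>))" using continuous_on_compose2[OF f_cont cG] by auto
      moreover have "(\<lambda>\<sigma>. f (G x \<sigma>)) ` {t..t'} \<subseteq> ball (f x0) \<rho>0" using inB unfolding B0_def by auto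
      ultimately show "continuous_on {t..t'} (\<lambda>\<sigma>. g0 (f (G x \<sigma>)))"
        by (rule continuous_on_compose2[OF H(7)])
      fix s assume "s \<in> {t..t'}"
      then show "f (G x s) = f (g0 (f (G x s)))" using H(5) inB unfolding B0_def by auto
    next
      show "t \<in> {t..t'}" using t' by auto
      show "G x t = g0 (f (G x t))" using H(8) t unfolding U0_def B0_def by auto
    qed (use that in auto)
    have "G x t' = g0 (f (G x t'))" using eq t' by auto
    moreover have "f (G x t') \<in> B0" using inB t' by auto
    moreover have "g0 (f (G x t')) \<in> ball x0 \<delta>0" using H(5) \<open>f (G x t') \<in> B0\<close> unfolding B0_def by blast
    ultimately show ?thesis unfolding U0_def by simp
  qed
  have injS: "a = b" if ab: "a \<in> S" "b \<in> S" "f a = f b" for a b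
  proof -
    obtain ta where ta: "ta \<ge> 0" "G a ta \<in> U0" "f (G a ta) \<in> B0" using ab(1) unfolding S_def by auto
    obtain tb where tb: "tb \<ge> 0" "G b tb \<in> U0" "f (G b tb) \<in> B0" using ab(2) unfolding S_def by auto
    define t where "t = max ta tb"
    have pe: "pth (f x0) a = pth (f x0) b" using ab(3) unfolding pth_def by (simp add: fun_eq_iff)
    have fe: "f (G a s) = f (G b s)" if "s \<ge> 0" for s using G_f[OF that] pe by simp
    have "G a t = g0 (f (G a t))" using F2[OF ta] unfolding t_def by auto
    moreover have "G b t = g0 (f (G b t))" using F2[OF tb] unfolding t_def by auto
    ultimately have "G a t = G b t" using fe[of t] ta unfolding t_def by auto
    then have "G a 0 = G b 0"
      using uniq[of "{0..t}" "G a" "G b" t 0] G_cont[of t a] G_cont[of t b] fe ta unfolding t_def by auto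
    then show ?thesis by simp
  qed
  have openS: "open S"
  proof -
    have "S = (\<Union>t\<in>{0..}. (\<lambda>x. G x t) -` (U0 \<inter> f -` B0))" unfolding S_def by auto
    moreover have "open ((\<lambda>x. G x t) -` (U0 \<inter> f -` B0))" if "t \<in> {0..}" for t
    proof (rule open_vimage[OF _ G_cont_x])
      show "open (U0 \<inter> f -` B0)" unfolding U0_def B0_def
        by (intro open_Int open_ball open_vimage f_cont)
    qed (use that in auto)
    ultimately show ?thesis by auto
  qed
  have x0S: "x0 \<in> S" unfolding S_def U0_def B0_def using H by (intro CollectI exI[of _ 0]) auto
  have F4a: "G x t \<in> S" if xt: "x \<in> S" "t \<ge> 0" for x t
  proof -
    obtain ta where ta: "ta \<ge> 0" "G x ta \<in> U0" "f (G x ta) \<in> B0" using xt(1) unfolding S_def by auto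
    have "G x (t + ta) \<in> U0 \<and> f (G x (t + ta)) \<in> B0" using F2[OF ta, of "t + ta"] that by auto
    then show ?thesis unfolding S_def using G_semi[OF that(2) ta(1), of x] ta by auto
  qed
  have F4b: "x \<in> S" if xt: "G x t \<in> S" "t \<ge> 0" for x t
  proof -
    obtain \<tau> where \<tau>: "\<tau> \<ge> 0" "G (G x t) \<tau> \<in> U0" "f (G (G x t) \<tau>) \<in> B0" using xt(1) unfolding S_def by auto
    then show ?thesis unfolding S_def using G_semi[OF that(2) \<tau>(1), of x] that(2)
      by (intro CollectI exI[of _ "t + \<tau>"]) auto
  qed
  have closedS: "closure S \<subseteq> S"
  proof
    fix x assume xc: "x \<in> closure S"
    define N where "N = norm (f x - f x0)"
    define t where "t = N / \<rho>0"
    have t0: "t \<ge> 0" unfolding t_def N_def using H(2) by simp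
    have "N < \<rho>0 * exp t"
    proof -
      have "N = \<rho>0 * t" unfolding t_def using H(2) by simp
      also have "\<dots> < \<rho>0 * (1 + t)" using H(2) by simp
      also have "\<dots> \<le> \<rho>0 * exp t" using H(2) by (intro mult_left_mono) (auto simp: exp_ge_add_one_self)
      finally show ?thesis .
    qed
    then have "exp (-t) * N < \<rho>0" by (simp add: exp_minus field_simps)
    define z where "z = G x t"
    have fz: "f z \<in> B0" unfolding z_def B0_def using G_f[OF t0, of x] \<open>exp (-t) * N < \<rho>0\<close>
      unfolding pth_def N_def by (simp add: dist_norm)
    have zc: "z \<in> closure S"
    proof -
      have "(\<lambda>x. G x t) ` closure S \<subseteq> closure S"
      proof (rule image_closure_subset)
        show "continuous_on (closure S) (\<lambda>x. G x t)" using G_cont_x[OF t0] by (rule continuous_on_subset) auto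
        show "closed (closure S)" by simp
        show "(\<lambda>x. G x t) ` S \<subseteq> closure S" using F4a t0 closure_subset by blast
      qed
      then show ?thesis using xc unfolding z_def by auto
    qed
    define w where "w = g0 (f z)"
    have w: "w \<in> U0" "f w = f z" using H(5) fz unfolding w_def U0_def B0_def by auto
    have wS: "w \<in> S" unfolding S_def using w fz by (intro CollectI exI[of _ 0]) auto
    obtain e where e: "e > 0" "ball w e \<subseteq> S" using openS wS open_contains_ball by blast
    obtain \<delta> \<rho> K g where HH: "0 < \<delta>" "\<delta> \<le> e" "0 < \<rho>" "0 < K"
       "\<forall>y\<in>ball (f w) \<rho>. g y \<in> ball w \<delta> \<and> f (g y) = y"
       "\<forall>y1\<in>ball (f w) \<rho>. \<forall>y2\<in>ball (f w) \<rho>. norm (g y1 - g y2) \<le> K * norm (y1 - y2)"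
       "g (f w) = w"
      using LH2[OF e(1), of w] by auto
    have "dist z w < \<epsilon>" if \<epsilon>: "\<epsilon> > 0" for \<epsilon>
    proof -
      have "min \<rho> (\<epsilon>/(2*K)) > 0" using HH \<epsilon> by simp
      then obtain \<eta> where \<eta>: "\<eta> > 0" "\<And>z'. dist z' z < \<eta> \<Longrightarrow> dist (f z') (f z) < min \<rho> (\<epsilon>/(2*K))"
        using f_cont[of UNIV] unfolding continuous_on_iff by (metis UNIV_I)
      have "min \<eta> (\<epsilon>/2) > 0" using \<eta> \<epsilon> by simp
      then obtain z' where z': "z' \<in> S" "dist z' z < min \<eta> (\<epsilon>/2)" using zc unfolding closure_approachable by blast
      have fz': "dist (f z') (f w) < \<rho>" "norm (f z' - f w) < \<epsilon>/(2*K)" using \<eta>(2)[of z'] z' w(2) by (auto simp: dist_norm)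
      have gin: "f z' \<in> ball (f w) \<rho>" using fz' by (simp add: dist_commute)
      have "g (f z') \<in> ball w \<delta>" using HH(5) gin by blast
      then have "g (f z') \<in> ball w e" using HH(2) by auto
      then have "g (f z') \<in> S" using e(2) by blast
      moreover have "f (g (f z')) = f z'" using HH(5) gin by auto
      ultimately have gz': "g (f z') = z'" using injS z'(1) by blast
      have fwin: "f w \<in> ball (f w) \<rho>" using HH(3) by simp
      have "dist z' w = norm (g (f z') - g (f w))" using gz' HH(7) by (simp add: dist_norm)
      also have "\<dots> \<le> K * norm (f z' - f w)" using HH(6) gin fwin by blast
      also have "\<dots> < K * (\<epsilon>/(2*K))" using fz'(2) HH(4) by (intro mult_strict_left_mono) auto
      also have "\<dots> = \<epsilon>/2" using HH(4) by simp
      finally have "dist z' w < \<epsilon>/2" .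
      moreover have "dist z z' < \<epsilon>/2" using z' by (simp add: dist_commute)
      ultimately show ?thesis using dist_triangle[of z w z'] by simp
    qed
    then have "z = w" by (metis dist_pos_lt less_irrefl)
    then have "G x t \<in> S" using wS unfolding z_def by simp
    then show "x \<in> S" using F4b t0 by blast
  qed
  have "S = UNIV"
  proof -
    have "openin (top_of_set UNIV) S" using openS by simp
    moreover have "closed S" using closure_subset_eq[THEN iffD1, OF closedS] .
    then have "closedin (top_of_set UNIV) S" by simp
    ultimately show ?thesis using connected_UNIV x0S unfolding connected_clopen by blast
  qed
  then show ?thesis using injS unfolding inj_def by blast
qed

end


context gd begin

lemma Li_diff: "Li b - Li a = (Li b o\<^sub>L (f' a - f' b)) o\<^sub>L Li a"
proof (rule blinfun_eqI)
  fix h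
  have "((Li b o\<^sub>L (f' a - f' b)) o\<^sub>L Li a) h = Li b (f' a (Li a h) - f' b (Li a h))"
    by (simp add: blinfun.diff_left)
  also have "\<dots> = Li b h - Li a h" by (simp add: blinfun.diff_right)
  finally show "(Li b - Li a) h = ((Li b o\<^sub>L (f' a - f' b)) o\<^sub>L Li a) h"
    by (simp add: blinfun.diff_left)
qed

lemma inverse_C1:
  assumes inj: "inj f"
  shows "\<exists>g. (\<forall>x. g (f x) = x) \<and> (\<forall>y\<in>range f. f (g y) = y) \<and> C1_on (range f) g"
proof -
  define g where "g = inv f"
  have gf: "\<And>x. g (f x) = x" unfolding g_def using inj by simp
  have fg: "\<And>y. y \<in> range f \<Longrightarrow> f (g y) = y" unfolding g_def by (simp add: f_inv_into_f)
  have gcont: "continuous (at y) g" if yr: "y \<in> range f" for y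
  proof -
    obtain a where a: "y = f a" using yr by auto
    obtain \<delta> \<rho> K gl where H: "0 < \<rho>"
       "\<forall>y\<in>ball (f a) \<rho>. gl y \<in> ball a \<delta> \<and> f (gl y) = y"
       "continuous_on (ball (f a) \<rho>) gl"
      using LH2[of 1 a] by auto
    have "continuous (at y) gl" using H(1,3) a by (simp add: continuous_on_eq_continuous_at)
    then show ?thesis
    proof (rule continuous_transform_within[OF _ H(1)])
      fix y' assume "dist y' y < \<rho>"
      then have "f (gl y') = y'" using H(2) a by (auto simp: dist_commute)
      then show "gl y' = g y'" using gf[of "gl y'"] by simp
    qed simp
  qed
  have der: "(g has_derivative blinfun_apply (Li (g y))) (at y)" if y: "y \<in> range f" for y
  proof (rule has_derivative_inverse_basic[where f=f and f'="blinfun_apply (f' (g y))" and T="range f"])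
    show "(f has_derivative blinfun_apply (f' (g y))) (at (g y))" by (rule deriv)
    show "bounded_linear (blinfun_apply (Li (g y)))" by (rule blinfun.bounded_linear_right)
    show "blinfun_apply (Li (g y)) \<circ> blinfun_apply (f' (g y)) = id" by (auto simp: fun_eq_iff)
    show "continuous (at y) g" using gcont y .
    show "open (range f)" using open_image[of UNIV] by simp
  qed (use y fg in auto)
  have cont: "continuous_on (range f) (\<lambda>y. Li (g y))"
    unfolding continuous_on_iff
  proof (intro ballI allI impI)
    fix y \<epsilon> assume y: "y \<in> range f" and \<epsilon>: "(\<epsilon>::real) > 0"
    define a where "a = g y"
    define r where "r = norm a + 1"
    have r: "r > 0" unfolding r_def by (simp add: add_nonneg_pos)
    obtain M where M: "\<And>z. z \<in> cball 0 r \<Longrightarrow> norm (Li z) \<le> M"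
      using bdd_inv[OF r] unfolding bdd_above_def by blast
    have M0: "M \<ge> 0" using M[of 0] r norm_ge_zero[of "Li 0"] by (meson centre_in_cball less_imp_le order_trans)
    define c where "c = \<epsilon> / ((M + 1) * (norm (Li a) + 1))"
    have cpos: "c > 0" unfolding c_def using \<epsilon> M0 by (simp add: add_nonneg_pos)
    obtain d1 where d1: "d1 > 0" "\<And>b. dist b a < d1 \<Longrightarrow> dist (f' b) (f' a) < c"
      using cont_deriv cpos unfolding continuous_on_iff by (metis UNIV_I)
    have "min d1 1 > 0" using d1 by simp
    then obtain d2 where d2: "d2 > 0" "\<And>y'. dist y' y < d2 \<Longrightarrow> dist (g y') a < min d1 1"
      using gcont[OF y] unfolding continuous_at_eps_delta a_def by blast
    show "\<exists>d>0. \<forall>y'\<in>range f. dist y' y < d \<longrightarrow> dist (Li (g y')) (Li (g y)) < \<epsilon>"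
    proof (intro exI[of _ d2] conjI ballI impI)
      show "d2 > 0" by fact
      fix y' assume "y' \<in> range f" "dist y' y < d2"
      then have b: "dist (g y') a < d1" "dist (g y') a < 1" using d2(2) by auto
      define b where "b = g y'"
      have "norm b \<le> r" using b unfolding b_def r_def dist_norm
        using norm_triangle_ineq2[of "g y'" a] by linarith
      then have nb: "norm (Li b) \<le> M" using M by simp
      have nf: "norm (f' a - f' b) < c" using d1(2)[of b] b unfolding b_def by (simp add: dist_norm norm_minus_commute)
      have "dist (Li b) (Li a) = norm ((Li b o\<^sub>L (f' a - f' b)) o\<^sub>L Li a)"
        by (simp add: dist_norm Li_diff)
      also have "\<dots> \<le> norm (Li b) * norm (f' a - f' b) * norm (Li a)"
        by (metis (no_types, opaque_lifting) mult_right_mono norm_blinfun_compose norm_ge_zero order_trans)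
      also have "\<dots> \<le> M * c * (norm (Li a) + 1)"
      proof -
        have 1: "norm (Li b) * norm (f' a - f' b) \<le> M * c"
          by (rule mult_mono) (use nb nf M0 in auto)
        have "0 \<le> M * c" using M0 cpos by simp
        from mult_mono[OF 1 _ this norm_ge_zero, of "norm (Li a)" "norm (Li a) + 1"]
        show ?thesis by simp
      qed
      also have "\<dots> < (M + 1) * c * (norm (Li a) + 1)"
        using cpos by (intro mult_strict_right_mono) (auto simp: add_nonneg_pos)
      also have "\<dots> = \<epsilon>"
      proof -
        define P where "P = (M + 1) * (norm (Li a) + 1)"
        have "M + 1 > 0" using M0 by linarith
        moreover have "norm (Li a) + 1 > 0" using norm_ge_zero[of "Li a"] by linarith
        ultimately have "P > 0" unfolding P_def by (rule mult_pos_pos)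
        have "(M + 1) * c * (norm (Li a) + 1) = P * c" unfolding P_def by (simp only: ac_simps)
        also have "\<dots> = P * (\<epsilon> / P)" unfolding c_def P_def by (rule refl)
        also have "\<dots> = \<epsilon>" using \<open>P > 0\<close> by simp
        finally show ?thesis .
      qed
      finally show "dist (Li (g y')) (Li (g y)) < \<epsilon>" unfolding b_def a_def .
    qed
  qed
  have "C1_on (range f) g" unfolding C1_on_def
    by (rule exI[of _ "\<lambda>y. Li (g y)"]) (use der cont in blast)
  then show ?thesis using gf fg by (intro exI[of _ g]) blast
qed

end

theorem theorem2p1:
  fixes f :: "'a::banach \<Rightarrow> 'b::banach"
    and f' :: "'a \<Rightarrow> ('a \<Rightarrow>\<^sub>L 'b)"
  assumes deriv: "\<And>x. (f has_derivative blinfun_apply (f' x)) (at x)"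
    and cont_deriv: "continuous_on UNIV f'"
    and isom: "\<And>x. is_isom (f' x)"
    and bdd_inv: "\<And>r. 0 < r \<Longrightarrow> bdd_above ((\<lambda>x. norm (blinfun_inv (f' x))) ` cball 0 r)"
    and cond3: "\<exists>x0 k. locally_lipschitz k \<and> coercive k \<and> (\<forall>x. k x \<ge> 0) \<and> has_right_dir_derivs k \<and>
        bdd_above {right_dir_deriv k x v | x v. v = - blinfun_inv (f' x) (f x - f x0)}"
  shows "inj f \<and> open (range f) \<and>
         (\<exists>g. (\<forall>x. g (f x) = x) \<and> (\<forall>y\<in>range f. f (g y) = y) \<and> C1_on (range f) g) \<and>
         (\<forall>x0 k. locally_lipschitz k \<and> coercive k \<and> (\<forall>x. k x \<ge> 0) \<and> has_right_dir_derivs k \<and>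
            bdd_above {right_dir_deriv k x v | x v. v = - blinfun_inv (f' x) (f x - f x0)} \<longrightarrow>
            (\<forall>y\<in>range f. \<forall>s\<in>{0..1}. f x0 + s *\<^sub>R (y - f x0) \<in> range f))"
proof -
  interpret gd f f' using assms by unfold_locales auto
  have complete_of: "\<exists>\<gamma>. lift_on (f x0) x T \<gamma>"
    if k: "locally_lipschitz k" "coercive k" "has_right_dir_derivs k"
      "bdd_above {right_dir_deriv k x v | x v. v = - blinfun_inv (f' x) (f x - f x0)}"
      and T: "T \<ge> 0" for x0 k x T
  proof -
    obtain C where C: "\<And>z. z \<in> {right_dir_deriv k x v | x v. v = - blinfun_inv (f' x) (f x - f x0)} \<Longrightarrow> z \<le> C"
      using k(4) unfolding bdd_above_def by blast
    have Cb: "right_dir_deriv k x (vf (f x0) x) \<le> C" for x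
      using C[of "right_dir_deriv k x (vf (f x0) x)"] unfolding vf_def by blast
    interpret gdk f f' x0 k C by unfold_locales (use k Cb in auto)
    show ?thesis using lift_exists[OF T] .
  qed
  obtain x0 k where k: "locally_lipschitz k" "coercive k" "has_right_dir_derivs k"
      "bdd_above {right_dir_deriv k x v | x v. v = - blinfun_inv (f' x) (f x - f x0)}"
    using cond3 by blast
  interpret gd2 f f' x0 using complete_of[OF k] by unfold_locales auto
  have injf: "inj f" by (rule inj_f)
  have "open (range f)" using open_image[of UNIV] by simp
  moreover have "\<forall>x0 k. locally_lipschitz k \<and> coercive k \<and> (\<forall>x. k x \<ge> 0) \<and> has_right_dir_derivs k \<and>
            bdd_above {right_dir_deriv k x v | x v. v = - blinfun_inv (f' x) (f x - f x0)} \<longrightarrow>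
            (\<forall>y\<in>range f. \<forall>s\<in>{0..1}. f x0 + s *\<^sub>R (y - f x0) \<in> range f)"
  proof (intro allI impI ballI)
    fix x0' k' y s
    assume kk: "locally_lipschitz k' \<and> coercive k' \<and> (\<forall>x. k' x \<ge> 0) \<and> has_right_dir_derivs k' \<and>
            bdd_above {right_dir_deriv k' x v | x v. v = - blinfun_inv (f' x) (f x - f x0')}"
      and y: "y \<in> range f" and s: "s \<in> {0..1::real}"
    obtain x where x: "y = f x" using y by auto
    show "f x0' + s *\<^sub>R (y - f x0') \<in> range f"
    proof (cases "s = 0")
      case True then show ?thesis by simp
    next
      case False
      then have sp: "s > 0" using s by auto
      define t where "t = - ln s"
      have t0: "t \<ge> 0" unfolding t_def using s sp by simp
      have "\<exists>\<gamma>. lift_on (f x0') x t \<gamma>" by (rule complete_of) (use kk t0 in auto)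
      then obtain \<gamma> where g: "lift_on (f x0') x t \<gamma>" by blast
      have "f (\<gamma> t) = pth (f x0') x t" using g t0 unfolding lift_on_def by auto
      also have "\<dots> = f x0' + s *\<^sub>R (y - f x0')" unfolding pth_def t_def x using sp by simp
      finally show ?thesis by (metis rangeI)
    qed
  qed
  ultimately show ?thesis using injf inverse_C1[OF injf] by blast
qed


end
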